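(* There is an absolute constant $c>0$ such that for every compact connected subset $K$ of $\mathbb{D}$ and every $0<\varepsilon<1$: if $\operatorname{diam}_\rho K>1-\varepsilon$, then $\operatorname{Cap}(K)\ge c\log(1/\varepsilon)$. In particular, $\operatorname{Cap}(K)\to\infty$ as $\operatorname{diam}_\rho K\to1$.
   Context: Pseudo-hyperbolic distance: $\rho(z,w)=\left|\frac{z-w}{1-\bar zw}\right|$ for $z,w\in\mathbb{D}$; $\operatorname{diam}_\rho$ is the diameter for this metric. Green capacity: $g(z,w)=\log\left|\frac{1-\bar wz}{z-w}\right|$, $I(\mu)=\iint g\,d\mu\,d\mu$, $V(K)=\inf I(\mu)$ over probability measures supported by $K$, $\operatorname{Cap}(K)=1/V(K)$. *)

theory Defs
  imports "HOL-Probability.Probability"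
begin

definition unit_disc :: "complex set" where
  "unit_disc = ball 0 1"

definition pseudo_hyp :: "complex \<Rightarrow> complex \<Rightarrow> real" where
  "pseudo_hyp z w = cmod ((z - w) / (1 - cnj z * w))"

definition diam_rho :: "complex set \<Rightarrow> real" where
  "diam_rho K = (if K = {} then 0 else (SUP p\<in>K \<times> K. pseudo_hyp (fst p) (snd p)))"

definition green :: "complex \<Rightarrow> complex \<Rightarrow> ennreal" where
  "green z w = (if z = w then \<infinity>
     else ennreal (ln (cmod (1 - cnj w * z) / cmod (z - w))))"

definition green_energy :: "complex measure \<Rightarrow> ennreal" where
  "green_energy \<mu> = (\<integral>\<^sup>+ z. (\<integral>\<^sup>+ w. green z w \<partial>\<mu>) \<partial>\<mu>)"

definition prob_measures_on :: "complex set \<Rightarrow> complex measure set" where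
  "prob_measures_on K = {\<mu>. sets \<mu> = sets borel \<and> prob_space \<mu> \<and> emeasure \<mu> K = 1}"

definition green_V :: "complex set \<Rightarrow> ennreal" where
  "green_V K = (INF \<mu>\<in>prob_measures_on K. green_energy \<mu>)"

definition green_cap :: "complex set \<Rightarrow> ennreal" where
  "green_cap K = 1 / green_V K"

end

theory Submission
  imports Defs
begin

lemma ident1: "(cmod (1 - cnj z * w))^2 - (cmod (z - w))^2 = (1 - (cmod z)^2) * (1 - (cmod w)^2)"
  by (simp only: cmod_power2) (simp add: power2_eq_square algebra_simps)

lemma disc_iff: "z \<in> unit_disc \<longleftrightarrow> cmod z < 1"
  by (simp add: unit_disc_def)

lemma den_pos: assumes "cmod a < 1" "cmod z < 1" shows "cmod (1 - cnj a * z) \<ge> 1 - cmod a * cmod z"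
    "1 - cmod a * cmod z > 0" "1 - cnj a * z \<noteq> 0"
proof -
  have "cmod (cnj a * z) = cmod a * cmod z" by (simp add: norm_mult)
  moreover have "cmod (1::complex) - cmod (cnj a * z) \<le> cmod (1 - cnj a * z)" by (rule norm_triangle_ineq2)
  ultimately show 1: "cmod (1 - cnj a * z) \<ge> 1 - cmod a * cmod z" by simp
  have "cmod a * cmod z < 1 * 1" using assms by (intro mult_strict_mono) auto
  then show 2: "1 - cmod a * cmod z > 0" by simp
  from 1 2 show "1 - cnj a * z \<noteq> 0" by auto
qed

lemma rho_lt1: assumes "cmod a < 1" "cmod z < 1" shows "pseudo_hyp a z < 1" "pseudo_hyp a z \<ge> 0"
proof -
  have d: "cmod (1 - cnj a * z) > 0" using den_pos[OF assms] by simp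
  have "(cmod (1 - cnj a * z))^2 - (cmod (a - z))^2 > 0"
    unfolding ident1 using assms by (intro mult_pos_pos) (auto simp: power_less_one_iff abs_square_less_1)
  then have "(cmod (a - z))^2 < (cmod (1 - cnj a * z))^2" by simp
  then have "cmod (a - z) < cmod (1 - cnj a * z)"
    using power2_less_imp_less d by fastforce
  then show "pseudo_hyp a z < 1" using d by (simp add: pseudo_hyp_def norm_divide)
  show "pseudo_hyp a z \<ge> 0" by (simp add: pseudo_hyp_def)
qed

lemma fid0: fixes X Y P Q :: complex assumes "P \<noteq> 0" "Q \<noteq> 0"
  shows "(1 - X / P * (Y / Q)) * (P * Q) = P * Q - X * Y"
  using assms by (simp add: field_simps)

definition mob :: "complex \<Rightarrow> complex \<Rightarrow> complex" where
  "mob a z = (a - z) / (1 - cnj a * z)"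

lemma mob_rho: "cmod (mob a z) = pseudo_hyp a z"
  by (simp add: mob_def pseudo_hyp_def)

lemma mob_inv: assumes a: "cmod a < 1" and z: "cmod z < 1" and w: "cmod w < 1"
  shows "pseudo_hyp (mob a z) (mob a w) = pseudo_hyp z w"
proof -
  have d1: "1 - cnj a * z \<noteq> 0" using den_pos[OF a z] by simp
  have d2: "1 - cnj a * w \<noteq> 0" using den_pos[OF a w] by simp
  have d3: "1 - cnj z * w \<noteq> 0" using den_pos[OF z w] by simp
  have d1': "1 - a * cnj z \<noteq> 0" using d1
    by (metis complex_cnj_cnj complex_cnj_diff complex_cnj_mult complex_cnj_one complex_cnj_zero_iff mult.commute)
  have s: "1 - a * cnj a \<noteq> 0" using den_pos[OF a a] by (simp add: mult.commute)
  have cm: "cnj (mob a z) = (cnj a - cnj z) / (1 - a * cnj z)" by (simp add: mob_def)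
  have e1: "mob a z - mob a w = (1 - a * cnj a) * (w - z) / ((1 - cnj a * z) * (1 - cnj a * w))"
    unfolding mob_def using d1 d2 by (simp add: field_simps)
  have e2': "(1 - cnj (mob a z) * mob a w) * ((1 - a * cnj z) * (1 - cnj a * w)) = (1 - a * cnj a) * (1 - cnj z * w)"
    unfolding cm unfolding mob_def fid0[OF d1' d2] by (simp add: algebra_simps)
  have e2: "1 - cnj (mob a z) * mob a w = (1 - a * cnj a) * (1 - cnj z * w) / ((1 - a * cnj z) * (1 - cnj a * w))"
    using e2' d1' d2 by (simp add: eq_divide_eq)
  have c1: "cmod (1 - a * cnj z) = cmod (1 - cnj a * z)"
    by (metis complex_cnj_cnj complex_cnj_diff complex_cnj_mult complex_cnj_one complex_mod_cnj mult.commute)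
  have n1: "cmod (1 - a * cnj a) \<noteq> 0" "cmod (1 - cnj a * w) \<noteq> 0" "cmod (1 - cnj a * z) \<noteq> 0" using s d2 d1 by auto
  show ?thesis unfolding pseudo_hyp_def e1 e2 norm_divide norm_mult c1 using n1
    by (simp add: norm_minus_commute field_simps)
qed

lemma key0: assumes u: "cmod u < 1" and v: "cmod v < 1"
  shows "pseudo_hyp u v \<ge> \<bar>cmod u - cmod v\<bar> / (1 - cmod u * cmod v)"
proof -
  define r where "r = cmod u"
  define s where "s = cmod v"
  define D where "D = cmod (1 - cnj u * v)"
  have r: "0 \<le> r" "r < 1" and s: "0 \<le> s" "s < 1" using u v by (auto simp: r_def s_def)
  have D1: "D \<ge> 1 - r * s" and D2: "1 - r * s > 0" using den_pos[OF u v] by (auto simp: D_def r_def s_def)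
  have Dp: "D > 0" using D1 D2 by simp
  have id: "(cmod (u - v))^2 = D^2 - (1 - r^2) * (1 - s^2)"
    using ident1[of u v] by (simp add: D_def r_def s_def)
  have ph: "pseudo_hyp u v = cmod (u - v) / D" by (simp add: pseudo_hyp_def D_def norm_divide)
  have rho2: "(pseudo_hyp u v)^2 = 1 - (1 - r^2) * (1 - s^2) / D^2"
    unfolding ph power_divide id using Dp by (simp add: field_simps)
  have nn: "0 \<le> (1 - r^2) * (1 - s^2)" using r s by (simp add: abs_square_le_1 mult_nonneg_nonneg)
  have "(1 - r * s)^2 \<le> D^2" using D1 D2 by (simp add: power_mono)
  then have "(1 - r^2) * (1 - s^2) / D^2 \<le> (1 - r^2) * (1 - s^2) / (1 - r * s)^2"
    using nn D2 Dp by (intro divide_left_mono) auto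
  then have "(\<bar>r - s\<bar> / (1 - r * s))^2 \<le> (pseudo_hyp u v)^2"
    unfolding rho2 using D2 by (simp add: power_divide field_simps) (simp add: power2_eq_square algebra_simps)
  then show ?thesis unfolding r_def[symmetric] s_def[symmetric]
    by (rule power2_le_imp_le) (simp add: pseudo_hyp_def)
qed

lemma key1: assumes p: "cmod p < 1" and z: "cmod z < 1" and w: "cmod w < 1"
  shows "pseudo_hyp z w \<ge> \<bar>pseudo_hyp p z - pseudo_hyp p w\<bar> / (1 - pseudo_hyp p z * pseudo_hyp p w)"
proof -
  have "cmod (mob p z) < 1" "cmod (mob p w) < 1" using rho_lt1[OF p z] rho_lt1[OF p w] by (auto simp: mob_rho)
  from key0[OF this] show ?thesis by (simp add: mob_inv[OF p z w] mob_rho)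
qed

definition psi :: "complex \<Rightarrow> complex \<Rightarrow> real" where
  "psi p z = ln ((1 + pseudo_hyp p z) / (1 - pseudo_hyp p z))"

definition th :: "real \<Rightarrow> real" where
  "th y = (exp y - 1) / (exp y + 1)"

definition kk :: "real \<Rightarrow> ennreal" where
  "kk x = (if x = 0 then \<infinity> else ennreal (ln ((exp \<bar>x\<bar> + 1) / (exp \<bar>x\<bar> - 1))))"

lemma hdiv: fixes x y :: real assumes "a \<noteq> 0" "b \<noteq> 0" shows "(x / (a * b)) / (y / (a * b)) = x / y"
  using assms by (simp add: field_simps)

lemma th_rel0: assumes "0 \<le> s" "s \<le> r" "r < 1"
  shows "(r - s) / (1 - r * s) = th (ln ((1 + r) / (1 - r)) - ln ((1 + s) / (1 - s)))"
proof -
  define A where "A = (1 + r) / (1 - r)"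
  define B where "B = (1 + s) / (1 - s)"
  have Ap: "A > 0" and Bp: "B > 0" using assms by (auto simp: A_def B_def)
  have e: "exp (ln A - ln B) = A / B" using Ap Bp by (simp add: exp_diff)
  have "th (ln A - ln B) = (A - B) / (A + B)" unfolding th_def e
  proof -
    have "A * B + B * B > 0" "A + B > 0" using Ap Bp by (auto intro: add_pos_pos)
    then show "(A / B - 1) / (A / B + 1) = (A - B) / (A + B)" using Bp by (simp add: field_simps)
  qed
  also have "\<dots> = (r - s) / (1 - r * s)"
  proof -
    have n: "1 - r \<noteq> 0" "1 - s \<noteq> 0" using assms by auto
    have "A - B = 2 * (r - s) / ((1 - r) * (1 - s))" unfolding A_def B_def using n
      by (simp add: field_simps)
    moreover have "A + B = 2 * (1 - r * s) / ((1 - r) * (1 - s))" unfolding A_def B_def using n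
      by (simp add: field_simps)
    ultimately have "(A - B) / (A + B) = (2 * (r - s) / ((1 - r) * (1 - s))) / (2 * (1 - r * s) / ((1 - r) * (1 - s)))"
      by (simp only:)
    also have "\<dots> = (2 * (r - s)) / (2 * (1 - r * s))" by (rule hdiv[OF n])
    finally show ?thesis by (simp only: mult_divide_mult_cancel_left_if) simp
  qed
  finally show ?thesis by (simp add: A_def B_def)
qed

lemma th_rel: assumes "0 \<le> s" "s < 1" "0 \<le> r" "r < 1"
  shows "\<bar>r - s\<bar> / (1 - r * s) = th \<bar>ln ((1 + r) / (1 - r)) - ln ((1 + s) / (1 - s))\<bar>"
proof (cases "s \<le> r")
  case True
  have "ln ((1 + s) / (1 - s)) \<le> ln ((1 + r) / (1 - r))" using assms True
    by (subst ln_le_cancel_iff) (auto simp: field_simps)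
  then show ?thesis using th_rel0[of s r] assms True by simp
next
  case False
  have "ln ((1 + r) / (1 - r)) \<le> ln ((1 + s) / (1 - s))" using assms False
    by (subst ln_le_cancel_iff) (auto simp: field_simps)
  then show ?thesis using th_rel0[of r s] assms False by (simp add: mult.commute abs_minus_commute)
qed

lemma th_le_rho: assumes p: "cmod p < 1" and z: "cmod z < 1" and w: "cmod w < 1"
  shows "th \<bar>psi p z - psi p w\<bar> \<le> pseudo_hyp z w"
  using key1[OF p z w] th_rel[of "pseudo_hyp p w" "pseudo_hyp p z"] rho_lt1[OF p z] rho_lt1[OF p w]
  by (simp add: psi_def)

lemma th_pos: "y > 0 \<Longrightarrow> th y > 0"
proof -
  assume "y > 0"
  then have "exp y > 1" by simp
  then have "exp y - 1 > 0" "exp y + 1 > 0" by linarith+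
  then show ?thesis by (simp add: th_def)
qed

lemma green_le_kk: assumes p: "cmod p < 1" and z: "cmod z < 1" and w: "cmod w < 1"
  shows "green z w \<le> kk (psi p z - psi p w)"
proof (cases "z = w \<or> psi p z - psi p w = 0")
  case True then show ?thesis by (auto simp: kk_def green_def)
next
  case False
  define x where "x = \<bar>psi p z - psi p w\<bar>"
  have x: "x > 0" using False by (auto simp: x_def)
  have t: "th x \<le> pseudo_hyp z w" "th x > 0" using th_le_rho[OF p z w] th_pos[OF x] by (auto simp: x_def)
  have c: "cmod (1 - cnj w * z) = cmod (1 - cnj z * w)"
    by (metis complex_cnj_cnj complex_cnj_diff complex_cnj_mult complex_cnj_one complex_mod_cnj mult.commute)
  have d: "cmod (1 - cnj z * w) > 0" using den_pos[OF z w] by auto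
  have g: "cmod (1 - cnj w * z) / cmod (z - w) = 1 / pseudo_hyp z w"
    unfolding c pseudo_hyp_def by (simp add: norm_divide)
  have "ln (1 / pseudo_hyp z w) \<le> ln (1 / th x)"
    using t by (subst ln_le_cancel_iff) (auto simp: divide_simps)
  also have "1 / th x = (exp x + 1) / (exp x - 1)" by (simp add: th_def)
  finally show ?thesis using False by (auto simp: kk_def green_def g x_def intro!: ennreal_leI)
qed

lemma ln_sqrt_bd: assumes "(v::real) \<ge> 0" shows "ln (1 + v) \<le> 2 * sqrt v"
proof -
  have "ln (1 + v) = 2 * ln (sqrt (1 + v))" using assms by (simp add: ln_sqrt)
  also have "\<dots> \<le> 2 * (sqrt (1 + v) - 1)" using ln_le_minus_one[of "sqrt (1 + v)"] assms by simp
  also have "sqrt (1 + v) \<le> sqrt 1 + sqrt v" using assms by (intro sqrt_add_le_add_sqrt) auto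
  then have "2 * (sqrt (1 + v) - 1) \<le> 2 * sqrt v" by simp
  finally show ?thesis .
qed

lemma L_eq: assumes "(y::real) > 0" shows "(exp y + 1) / (exp y - 1) = 1 + 2 / (exp y - 1)"
proof -
  have "exp y - 1 > 0" using assms by simp
  then show ?thesis by (simp add: field_simps)
qed

lemma kk_bd1: assumes y: "(y::real) > 0" shows "ln ((exp y + 1) / (exp y - 1)) \<le> 3 * y powr (-(1/2))"
proof -
  have e: "exp y - 1 \<ge> y" using exp_ge_add_one_self[of y] by linarith
  have ep: "exp y - 1 > 0" using e y by linarith
  have v0: "2 / (exp y - 1) \<ge> 0" using ep by simp
  have v: "2 / (exp y - 1) \<le> 2 / y" by (rule divide_left_mono[OF e]) (use ep y in auto)
  have "ln ((exp y + 1) / (exp y - 1)) \<le> 2 * sqrt (2 / (exp y - 1))"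
    unfolding L_eq[OF y] by (rule ln_sqrt_bd[OF v0])
  also have "\<dots> \<le> 2 * sqrt (2 / y)" using v by simp
  also have "2 * sqrt (2 / y) = 2 * (sqrt 2 * y powr (-(1/2)))"
  proof -
    have "y powr (-(1/2)) = inverse (y powr (1/2))" by (rule powr_minus)
    also have "\<dots> = inverse (sqrt y)" using y by (simp only: powr_half_sqrt less_imp_le)
    finally have h: "y powr (-(1/2)) = inverse (sqrt y)" .
    show ?thesis unfolding h real_sqrt_divide by (simp add: divide_inverse)
  qed
  also have "2 * (sqrt 2 * y powr (-(1/2))) \<le> 3 * y powr (-(1/2))"
  proof -
    have "(sqrt 2)^2 \<le> (3/2::real)^2" by (simp add: power2_eq_square)
    then have "sqrt 2 \<le> 3/2" by (rule power2_le_imp_le) simp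
    then have "(2 * sqrt 2) * y powr (-(1/2)) \<le> 3 * y powr (-(1/2))"
      by (intro mult_right_mono) auto
    then show ?thesis by (simp only: mult.assoc)
  qed
  finally show ?thesis .
qed

lemma kk_bd2: assumes y: "(y::real) \<ge> 1" shows "ln ((exp y + 1) / (exp y - 1)) \<le> 4 * y powr (-2)"
proof -
  have yp: "y > 0" using y by simp
  have e: "exp y - 1 \<ge> y^2 / 2" using exp_lower_Taylor_quadratic[of y] yp by linarith
  have y2: "y^2 / 2 > 0" using yp by simp
  have v0: "2 / (exp y - 1) \<ge> 0" using yp by simp
  have ep: "exp y - 1 > 0" using e y2 by linarith
  have "ln ((exp y + 1) / (exp y - 1)) \<le> 2 / (exp y - 1)"
    unfolding L_eq[OF yp] by (rule ln_add_one_self_le_self[OF v0])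
  also have "2 / (exp y - 1) \<le> 2 / (y^2 / 2)" by (rule divide_left_mono[OF e _ mult_pos_pos[OF ep y2]]) simp
  also have "2 / (y^2 / 2) = 4 * y powr (-2)"
  proof -
    have "y powr (-2) = inverse (y powr 2)" by (rule powr_minus)
    then have "y powr (-2) = inverse (y^2)" using yp by simp
    moreover have "2 / (y^2 / 2) = 4 / y^2" using yp by (simp add: field_simps)
    ultimately show ?thesis by (simp only: divide_inverse)
  qed
  finally show ?thesis .
qed

definition gg :: "real \<Rightarrow> ennreal" where
  "gg y = ennreal (3 * y powr (-(1/2))) * indicator {0..1} y + ennreal (4 * y powr (-2)) * indicator {1..} y"

lemma gg_meas[measurable]: "gg \<in> borel_measurable borel"
  unfolding gg_def by measurable

lemma kk_meas[measurable]: "kk \<in> borel_measurable borel"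
  unfolding kk_def by measurable

lemma kk_le_gg_abs: assumes "x \<noteq> 0" shows "kk x \<le> gg \<bar>x\<bar>"
proof -
  define y where "y = \<bar>x\<bar>"
  have y: "y > 0" using assms by (simp add: y_def)
  have k: "kk x = ennreal (ln ((exp y + 1) / (exp y - 1)))" using assms by (simp add: kk_def y_def)
  show ?thesis
  proof (cases "y \<le> 1")
    case True
    have "kk x \<le> ennreal (3 * y powr (-(1/2))) * indicator {0..1} y"
      unfolding k using True y kk_bd1[OF y] by (auto intro: ennreal_leI)
    also have "\<dots> \<le> gg y" unfolding gg_def by simp
    finally show ?thesis by (simp add: y_def)
  next
    case False
    have "kk x \<le> ennreal (4 * y powr (-2)) * indicator {1..} y"
      unfolding k using False y kk_bd2[of y] by (auto intro: ennreal_leI)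
    also have "\<dots> \<le> gg y" unfolding gg_def by simp
    finally show ?thesis by (simp add: y_def)
  qed
qed

lemma gg_int: "(\<integral>\<^sup>+y. gg y \<partial>lborel) = 10"
proof -
  have i1: "(\<integral>\<^sup>+y. ennreal (3 * y powr (-(1/2))) * indicator {0..1} y \<partial>lborel) = 6"
  proof -
    have "((\<lambda>y::real. 3 * y powr (-(1/2))) has_integral 3 * (1 powr (-(1/2) + 1) / (-(1/2) + 1))) {0..1}"
      by (intro has_integral_mult_right has_integral_powr_from_0) auto
    then have "(\<integral>\<^sup>+y. ennreal (3 * y powr (-(1/2))) * indicator {0..1} y \<partial>lborel) = ennreal (3 * (1 powr (-(1/2) + 1) / (-(1/2) + 1)))"
      by (intro nn_integral_has_integral_lebesgue') auto
    then show ?thesis by simp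
  qed
  have i2: "(\<integral>\<^sup>+y. ennreal (4 * y powr (-2)) * indicator {1..} y \<partial>lborel) = 4"
  proof -
    have "((\<lambda>y::real. 4 * y powr (-2)) has_integral 4 * (-(1 powr (-2 + 1)) / (-2 + 1))) {1..}"
      by (intro has_integral_mult_right has_integral_powr_to_inf) auto
    then have "(\<integral>\<^sup>+y. ennreal (4 * y powr (-2)) * indicator {1..} y \<partial>lborel) = ennreal (4 * (-(1 powr (-2 + 1)) / (-2 + 1)))"
      by (intro nn_integral_has_integral_lebesgue') auto
    then show ?thesis by simp
  qed
  have "(\<integral>\<^sup>+y. gg y \<partial>lborel) = (\<integral>\<^sup>+y. ennreal (3 * y powr (-(1/2))) * indicator {0..1} y \<partial>lborel)
       + (\<integral>\<^sup>+y. ennreal (4 * y powr (-2)) * indicator {1..} y \<partial>lborel)"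
    unfolding gg_def by (rule nn_integral_add) auto
  then show ?thesis using i1 i2 by simp
qed

lemma kk_int: "(\<integral>\<^sup>+x. kk x \<partial>lborel) \<le> 20"
proof -
  have "(\<integral>\<^sup>+x. kk x \<partial>lborel) \<le> (\<integral>\<^sup>+x. gg x + gg (- x) \<partial>lborel)"
  proof (rule nn_integral_mono_AE)
    show "AE x in lborel. kk x \<le> gg x + gg (- x)"
      using AE_lborel_singleton[of 0]
    proof eventually_elim
      case (elim x)
      have "gg \<bar>x\<bar> \<le> gg x + gg (- x)"
        by (cases "x \<ge> 0") (auto simp: add_increasing add_increasing2)
      with kk_le_gg_abs[OF elim] show ?case by (rule order_trans)
    qed
  qed
  also have "\<dots> = (\<integral>\<^sup>+x. gg x \<partial>lborel) + (\<integral>\<^sup>+x. gg (- x) \<partial>lborel)"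
    by (rule nn_integral_add) auto
  also have "(\<integral>\<^sup>+x. gg (- x) \<partial>lborel) = (\<integral>\<^sup>+x. gg x \<partial>lborel)"
    using nn_integral_real_affine[OF gg_meas, of "-1" 0] by simp
  finally show ?thesis by (simp add: gg_int)
qed

lemma fiber_compact:
  fixes \<psi> :: "complex \<Rightarrow> real"
  assumes "compact C" "continuous_on C \<psi>"
  shows "compact {z\<in>C. \<psi> z = t}"
proof -
  have "closed {z\<in>C. \<psi> z = t}"
    using continuous_closed_preimage_constant[OF assms(2) compact_imp_closed[OF assms(1)]] .
  moreover have "{z\<in>C. \<psi> z = t} = C \<inter> {z\<in>C. \<psi> z = t}" by auto
  ultimately show ?thesis using assms(1) by (metis compact_Int_closed)
qed

lemma compact_Inf_attain:
  assumes "compact (S::real set)" "S \<noteq> {}"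
  shows "Inf S \<in> S" "\<And>x. x \<in> S \<Longrightarrow> Inf S \<le> x"
proof -
  have b: "bdd_below S" using assms(1) by (intro bounded_imp_bdd_below compact_imp_bounded)
  show "Inf S \<in> S" using assms b by (intro closed_contains_Inf) (auto intro: compact_imp_closed)
  show "\<And>x. x \<in> S \<Longrightarrow> Inf S \<le> x" using b by (simp add: cInf_lower)
qed

definition infRe :: "complex set \<Rightarrow> (complex \<Rightarrow> real) \<Rightarrow> real \<Rightarrow> real" where
  "infRe C \<psi> t = (if t \<in> \<psi> ` C then Inf (Re ` {z\<in>C. \<psi> z = t}) else 0)"

lemma infRe_attain:
  fixes \<psi> :: "complex \<Rightarrow> real"
  assumes "compact C" "continuous_on C \<psi>" "t \<in> \<psi> ` C"
  shows "\<exists>z\<in>C. \<psi> z = t \<and> Re z = infRe C \<psi> t"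
    "\<And>z. z \<in> C \<Longrightarrow> \<psi> z = t \<Longrightarrow> infRe C \<psi> t \<le> Re z"
proof -
  let ?F = "{z\<in>C. \<psi> z = t}"
  have c: "compact (Re ` ?F)"
    by (intro compact_continuous_image continuous_intros fiber_compact assms)
  have ne: "Re ` ?F \<noteq> {}" using assms(3) by auto
  have e: "infRe C \<psi> t = Inf (Re ` ?F)" using assms(3) by (simp add: infRe_def)
  show "\<exists>z\<in>C. \<psi> z = t \<and> Re z = infRe C \<psi> t"
    using compact_Inf_attain(1)[OF c ne] unfolding e by force
  show "\<And>z. z \<in> C \<Longrightarrow> \<psi> z = t \<Longrightarrow> infRe C \<psi> t \<le> Re z"
    unfolding e by (rule compact_Inf_attain(2)[OF c ne]) auto
qed

lemma infRe_meas:
  fixes \<psi> :: "complex \<Rightarrow> real"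
  assumes C: "compact C" and cont: "continuous_on C \<psi>"
  shows "infRe C \<psi> \<in> borel_measurable borel"
proof (subst borel_measurable_iff_le, intro allI)
  fix a :: real
  have eq: "{w \<in> space borel. infRe C \<psi> w \<le> a} = \<psi> ` {z\<in>C. Re z \<le> a} \<union> (if 0 \<le> a then - (\<psi> ` C) else {})"
  proof (intro set_eqI iffI)
    fix t assume t: "t \<in> {w \<in> space borel. infRe C \<psi> w \<le> a}"
    show "t \<in> \<psi> ` {z\<in>C. Re z \<le> a} \<union> (if 0 \<le> a then - (\<psi> ` C) else {})"
    proof (cases "t \<in> \<psi> ` C")
      case True
      from infRe_attain(1)[OF C cont True] obtain z where "z \<in> C" "\<psi> z = t" "Re z = infRe C \<psi> t" by blast
      then show ?thesis using t by auto
    next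
      case False then show ?thesis using t by (auto simp: infRe_def)
    qed
  next
    fix t assume t: "t \<in> \<psi> ` {z\<in>C. Re z \<le> a} \<union> (if 0 \<le> a then - (\<psi> ` C) else {})"
    show "t \<in> {w \<in> space borel. infRe C \<psi> w \<le> a}"
    proof (cases "t \<in> \<psi> ` {z\<in>C. Re z \<le> a}")
      case True
      then obtain z where z: "z \<in> C" "Re z \<le> a" "t = \<psi> z" by auto
      then have "t \<in> \<psi> ` C" by auto
      from infRe_attain(2)[OF C cont this z(1)] z show ?thesis by auto
    next
      case False
      then have "0 \<le> a" "t \<notin> \<psi> ` C" using t by (auto split: if_splits)
      then show ?thesis by (auto simp: infRe_def)
    qed
  qed
  have c1: "compact (C \<inter> {z. Re z \<le> a})" using C by (intro compact_Int_closed closed_halfspace_Re_le)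
  have "compact (\<psi> ` {z\<in>C. Re z \<le> a})"
    using compact_continuous_image[OF continuous_on_subset[OF cont] c1] by (simp add: Int_def)
  then have s1: "\<psi> ` {z\<in>C. Re z \<le> a} \<in> sets borel" by (intro borel_closed compact_imp_closed)
  have "compact (\<psi> ` C)" by (rule compact_continuous_image[OF cont C])
  then have s2: "(if 0 \<le> a then - (\<psi> ` C) else {}) \<in> sets borel"
    by (auto intro: borel_open compact_imp_closed)
  show "{w \<in> space borel. infRe C \<psi> w \<le> a} \<in> sets borel" unfolding eq using s1 s2 by auto
qed

lemma selection:
  fixes \<psi> :: "complex \<Rightarrow> real"
  assumes K: "compact K" and cont: "continuous_on K \<psi>"
  shows "\<exists>f. f \<in> borel_measurable borel \<and> (\<forall>t\<in>\<psi>`K. f t \<in> K \<and> \<psi> (f t) = t)"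
proof -
  define m where "m = infRe K \<psi>"
  define Cb where "Cb b = K \<inter> {z. Im z \<le> b}" for b
  define F2 where "F2 t = {z\<in>K. \<psi> z = t \<and> Re z = m t}" for t
  define h where "h t = (if t \<in> \<psi>`K then Inf (Im ` F2 t) else 0)" for t
  define f where "f t = Complex (m t) (h t)" for t
  have mm[measurable]: "m \<in> borel_measurable borel" unfolding m_def by (rule infRe_meas[OF K cont])
  have F2c: "compact (F2 t)" for t
  proof -
    have "closed {z::complex. Re z = m t}"
    proof -
      have "{z::complex. Re z = m t} = {z. Re z \<le> m t} \<inter> {z. Re z \<ge> m t}" by auto
      then show ?thesis by (simp add: closed_Int closed_halfspace_Re_le closed_halfspace_Re_ge)
    qed
    moreover have "F2 t = {z\<in>K. \<psi> z = t} \<inter> {z. Re z = m t}" by (auto simp: F2_def)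
    ultimately show ?thesis using fiber_compact[OF K cont] by (metis compact_Int_closed)
  qed
  have CbK: "Cb b \<subseteq> K" for b by (auto simp: Cb_def)
  have Cbc: "compact (Cb b)" for b unfolding Cb_def using K by (intro compact_Int_closed closed_halfspace_Im_le)
  have Cbcont: "continuous_on (Cb b) \<psi>" for b using continuous_on_subset[OF cont CbK] .
  have attain: "f t \<in> F2 t" "h t = Inf (Im ` F2 t)" if t: "t \<in> \<psi>`K" for t
  proof -
    from infRe_attain(1)[OF K cont t] have ne: "F2 t \<noteq> {}" by (auto simp: F2_def m_def)
    have c: "compact (Im ` F2 t)" by (intro compact_continuous_image continuous_intros F2c)
    from compact_Inf_attain(1)[OF c] ne obtain z0 where z0: "z0 \<in> F2 t" "Im z0 = Inf (Im ` F2 t)" by force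
    show h: "h t = Inf (Im ` F2 t)" using t by (simp add: h_def)
    have "z0 = f t" using z0 unfolding f_def h by (intro complex_eqI) (auto simp: F2_def)
    then show "f t \<in> F2 t" using z0 by simp
  qed
  have hm[measurable]: "h \<in> borel_measurable borel"
  proof (subst borel_measurable_iff_le, intro allI)
    fix b :: real
    define mb where "mb = infRe (Cb b) \<psi>"
    have mbm[measurable]: "mb \<in> borel_measurable borel" unfolding mb_def by (rule infRe_meas[OF Cbc Cbcont])
    have eq: "{w \<in> space borel. h w \<le> b} = (\<psi> ` Cb b \<inter> {t. mb t \<le> m t}) \<union> (if 0 \<le> b then - (\<psi> ` K) else {})"
    proof (intro set_eqI iffI)
      fix t assume t: "t \<in> {w \<in> space borel. h w \<le> b}"
      show "t \<in> (\<psi> ` Cb b \<inter> {t. mb t \<le> m t}) \<union> (if 0 \<le> b then - (\<psi> ` K) else {})"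
      proof (cases "t \<in> \<psi> ` K")
        case True
        have z0: "f t \<in> F2 t" "h t = Inf (Im ` F2 t)" using attain[OF True] by auto
        have "Im (f t) = h t" by (simp add: f_def)
        then have fc: "f t \<in> Cb b" using z0 t by (auto simp: Cb_def F2_def)
        have ps: "\<psi> (f t) = t" using z0 by (auto simp: F2_def)
        have tc: "t \<in> \<psi> ` Cb b" using fc ps by (metis image_eqI)
        have "mb t \<le> Re (f t)" unfolding mb_def
          using fc ps by (intro infRe_attain(2)[OF Cbc Cbcont tc]) auto
        moreover have "Re (f t) = m t" by (simp add: f_def)
        ultimately show ?thesis using fc ps by force
      next
        case False
        then show ?thesis using t by (auto simp: h_def)
      qed
    next
      fix t assume t: "t \<in> (\<psi> ` Cb b \<inter> {t. mb t \<le> m t}) \<union> (if 0 \<le> b then - (\<psi> ` K) else {})"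
      show "t \<in> {w \<in> space borel. h w \<le> b}"
      proof (cases "t \<in> \<psi> ` Cb b \<and> mb t \<le> m t")
        case True
        then have tc: "t \<in> \<psi> ` Cb b" and le: "mb t \<le> m t" by auto
        from infRe_attain(1)[OF Cbc Cbcont tc] obtain z1 where z1: "z1 \<in> Cb b" "\<psi> z1 = t" "Re z1 = mb t"
          unfolding mb_def by blast
        have z1K: "z1 \<in> K" using z1 CbK by auto
        have tK: "t \<in> \<psi> ` K" using z1K z1 by auto
        have "m t \<le> Re z1" unfolding m_def using z1K z1 by (intro infRe_attain(2)[OF K cont tK])
        then have "z1 \<in> F2 t" using z1 z1K le by (auto simp: F2_def)
        moreover have "bdd_below (Im ` F2 t)"
          by (intro bounded_imp_bdd_below compact_imp_bounded compact_continuous_image continuous_intros F2c)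
        ultimately have "Inf (Im ` F2 t) \<le> Im z1" by (simp add: cInf_lower)
        then show ?thesis using attain(2)[OF tK] z1 by (auto simp: Cb_def)
      next
        case False
        then have "0 \<le> b" "t \<notin> \<psi> ` K" using t by (auto split: if_splits)
        then show ?thesis by (simp add: h_def)
      qed
    qed
    have "compact (\<psi> ` Cb b)" by (rule compact_continuous_image[OF Cbcont Cbc])
    then have s1: "\<psi> ` Cb b \<in> sets borel" by (intro borel_closed compact_imp_closed)
    have s1': "{t. mb t \<le> m t} \<in> sets borel" by measurable
    have "compact (\<psi> ` K)" by (rule compact_continuous_image[OF cont K])
    then have s2: "(if 0 \<le> b then - (\<psi> ` K) else {}) \<in> sets borel"
      by (auto intro: borel_open compact_imp_closed)
    show "{w \<in> space borel. h w \<le> b} \<in> sets borel" unfolding eq using s1 s1' s2 by auto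
  qed
  have fm: "f \<in> borel_measurable borel" unfolding f_def Complex_eq by measurable
  have "\<forall>t\<in>\<psi>`K. f t \<in> K \<and> \<psi> (f t) = t" using attain by (auto simp: F2_def)
  with fm show ?thesis by blast
qed

lemma green_meas0: "(\<lambda>x::complex\<times>complex. green (fst x) (snd x)) \<in> borel_measurable borel"
proof -
  have c: "closed {x::complex\<times>complex. fst x = snd x}"
    by (intro closed_Collect_eq continuous_intros)
  have m1: "(\<lambda>x::complex\<times>complex. cnj (snd x)) \<in> borel_measurable borel"
    by (intro borel_measurable_continuous_onI continuous_intros)
  have m2: "(\<lambda>x::complex\<times>complex. fst x) \<in> borel_measurable borel"
    by (intro borel_measurable_continuous_onI continuous_intros)
  have m3: "(\<lambda>x::complex\<times>complex. snd x) \<in> borel_measurable borel"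
    by (intro borel_measurable_continuous_onI continuous_intros)
  have "(\<lambda>x::complex\<times>complex. if x \<in> {x. fst x = snd x} then \<infinity> else ennreal (ln (cmod (1 - cnj (snd x) * fst x) / cmod (fst x - snd x)))) \<in> borel_measurable borel"
    using c m1 m2 m3 by (intro measurable_If_set) (measurable, auto intro: borel_closed)
  then show ?thesis unfolding green_def by simp
qed

lemma green_meas[measurable]: "(\<lambda>(z, w). green z w) \<in> borel_measurable (borel \<Otimes>\<^sub>M borel)"
  using green_meas0 unfolding borel_prod by (simp add: case_prod_beta')

lemma main_bound:
  assumes K: "compact K" and conn: "connected K" and sub: "K \<subseteq> unit_disc"
    and e0: "0 < \<epsilon>" and e1: "\<epsilon> < 1" and diam: "diam_rho K > 1 - \<epsilon>"
  shows "green_cap K \<ge> ennreal (1/20 * ln (1 / \<epsilon>))"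
proof -
  have Kd: "cmod z < 1" if "z \<in> K" for z using sub that by (auto simp: unit_disc_def)
  have Kne: "K \<noteq> {}" using diam e1 by (auto simp: diam_rho_def)
  have bdd: "bdd_above ((\<lambda>p. pseudo_hyp (fst p) (snd p)) ` (K \<times> K))"
  proof (rule bdd_aboveI2[of _ _ 1])
    have r1: "pseudo_hyp a b \<le> 1" if "cmod a < 1" "cmod b < 1" for a b using rho_lt1(1)[OF that] by simp
    fix x assume "x \<in> K \<times> K"
    then show "pseudo_hyp (fst x) (snd x) \<le> 1" using r1 Kd by auto
  qed
  have "\<exists>x\<in>K \<times> K. 1 - \<epsilon> < pseudo_hyp (fst x) (snd x)"
    using diam Kne bdd by (simp add: diam_rho_def less_cSUP_iff)
  then obtain p q where pK: "p \<in> K" and qK: "q \<in> K" and pq: "1 - \<epsilon> < pseudo_hyp p q" by auto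
  have p: "cmod p < 1" using Kd[OF pK] .
  define \<psi> where "\<psi> = psi p"
  have cr: "continuous_on K (\<lambda>z. pseudo_hyp p z)"
    unfolding pseudo_hyp_def using den_pos(3)[OF p Kd]
    by (intro continuous_intros) auto
  have rK: "pseudo_hyp p z < 1" "0 \<le> pseudo_hyp p z" if "z \<in> K" for z using rho_lt1[OF p Kd[OF that]] by auto
  have cont: "continuous_on K \<psi>"
  proof -
    have nz1: "\<forall>z\<in>K. 1 - pseudo_hyp p z \<noteq> 0" using rK(1) by force
    have nz2: "\<forall>z\<in>K. (1 + pseudo_hyp p z) / (1 - pseudo_hyp p z) \<noteq> 0"
      using rK by (smt (verit) divide_eq_0_iff)
    show ?thesis unfolding \<psi>_def psi_def using nz1 nz2 by (intro continuous_intros cr) auto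
  qed
  define T where "T = \<psi> q"
  define \<rho> where "\<rho> = pseudo_hyp p q"
  have \<rho>: "1 - \<epsilon> < \<rho>" "\<rho> < 1" "0 \<le> \<rho>" using pq rK[OF qK] by (auto simp: \<rho>_def)
  have "1 / \<epsilon> \<le> (1 + \<rho>) / (1 - \<rho>)"
  proof -
    have er: "\<epsilon> * \<rho> \<ge> 0" using e0 \<rho> by simp
    have "\<epsilon> * (1 + \<rho>) = \<epsilon> + \<epsilon> * \<rho>" by (simp add: algebra_simps)
    then have "1 - \<rho> \<le> \<epsilon> * (1 + \<rho>)" using \<rho> er by linarith
    then show ?thesis using e0 \<rho> by (simp add: divide_simps mult.commute)
  qed
  then have Tge: "ln (1 / \<epsilon>) \<le> T" using e0 \<rho>
    unfolding T_def \<psi>_def psi_def \<rho>_def[symmetric] by (subst ln_le_cancel_iff) auto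
  have "1 / \<epsilon> > 1" using e0 e1 by simp
  then have "ln (1 / \<epsilon>) > 0" by (rule ln_gt_zero)
  then have Tpos: "T > 0" using Tge by linarith
  have \<psi>p: "\<psi> p = 0" by (simp add: \<psi>_def psi_def pseudo_hyp_def)
  have Icc: "{0..T} \<subseteq> \<psi> ` K"
    using pK qK \<psi>p by (intro connected_contains_Icc connected_continuous_image cont conn) (auto simp: T_def)
  obtain f where fm[measurable]: "f \<in> borel_measurable borel" and fK0: "\<forall>t\<in>\<psi>`K. f t \<in> K \<and> \<psi> (f t) = t"
    using selection[OF K cont] by blast
  have fK: "f t \<in> K" "\<psi> (f t) = t" if "t \<in> {0..T}" for t using fK0 Icc that by auto
  define U where "U = uniform_measure lborel {0..T}"
  have eT: "emeasure lborel {0..T} = ennreal T" using Tpos by simp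
  have Up: "prob_space U" unfolding U_def using Tpos eT by (intro prob_space_uniform_measure) auto
  have sU: "sets U = sets borel" by (simp add: U_def)
  have fmU: "f \<in> measurable U borel" by (subst measurable_cong_sets[OF sU refl]) (rule fm)
  define \<mu> where "\<mu> = distr U borel f"
  have s\<mu>: "sets \<mu> = sets borel" by (simp add: \<mu>_def)
  have p\<mu>: "prob_space \<mu>" unfolding \<mu>_def by (rule prob_space.prob_space_distr[OF Up fmU])
  have Kb: "K \<in> sets borel" using K by (intro borel_closed compact_imp_closed)
  have "emeasure \<mu> K = emeasure U (f -` K \<inter> space U)" unfolding \<mu>_def by (rule emeasure_distr[OF fmU Kb])
  also have "\<dots> = emeasure lborel ({0..T} \<inter> f -` K) / emeasure lborel {0..T}"
  proof -
    have "f -` K \<in> sets lborel" using measurable_sets[OF fm Kb] by simp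
    then show ?thesis by (simp add: U_def)
  qed
  also have "{0..T} \<inter> f -` K = {0..T}" using fK by auto
  also have "emeasure lborel {0..T} / emeasure lborel {0..T} = 1" unfolding eT using Tpos by simp
  finally have \<mu>K: "emeasure \<mu> K = 1" .
  have \<mu>P: "\<mu> \<in> prob_measures_on K" using s\<mu> p\<mu> \<mu>K by (simp add: prob_measures_on_def)
  have gz[measurable]: "(\<lambda>w. green z w) \<in> borel_measurable borel" for z
  proof -
    have "(\<lambda>w::complex. (z, w)) \<in> borel_measurable borel"
      by (intro borel_measurable_continuous_onI continuous_intros)
    from measurable_compose[OF this green_meas0] show ?thesis by simp
  qed
  have inner: "(\<integral>\<^sup>+u. green (f t) (f u) \<partial>U) \<le> ennreal 20 / ennreal T" if t: "t \<in> {0..T}" for t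
  proof -
    have "(\<integral>\<^sup>+u. green (f t) (f u) \<partial>U) \<le> (\<integral>\<^sup>+u. kk (t - u) \<partial>U)"
    proof (rule nn_integral_mono_AE)
      show "AE u in U. green (f t) (f u) \<le> kk (t - u)"
        unfolding U_def
      proof (rule AE_uniform_measureI)
        show "{0..T} \<in> sets lborel" by simp
        show "AE u in lborel. u \<in> {0..T} \<longrightarrow> green (f t) (f u) \<le> kk (t - u)"
        proof (rule AE_I2, rule impI)
          fix u assume u: "u \<in> {0..T}"
          have "green (f t) (f u) \<le> kk (psi p (f t) - psi p (f u))"
            by (rule green_le_kk[OF p Kd[OF fK(1)[OF t]] Kd[OF fK(1)[OF u]]])
          then show "green (f t) (f u) \<le> kk (t - u)" using fK(2)[OF t] fK(2)[OF u] by (simp add: \<psi>_def)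
        qed
      qed
    qed
    also have "\<dots> = (\<integral>\<^sup>+u. kk (t - u) * indicator {0..T} u \<partial>lborel) / emeasure lborel {0..T}"
      unfolding U_def by (rule nn_integral_uniform_measure) auto
    also have "\<dots> \<le> (\<integral>\<^sup>+u. kk (t - u) \<partial>lborel) / ennreal T"
      unfolding eT by (intro divide_right_mono_ennreal nn_integral_mono) (auto simp: indicator_def)
    also have "(\<integral>\<^sup>+u. kk (t - u) \<partial>lborel) = (\<integral>\<^sup>+x. kk x \<partial>lborel)"
      using nn_integral_real_affine[OF kk_meas, of "-1" t] by simp
    also have "(\<integral>\<^sup>+x. kk x \<partial>lborel) / ennreal T \<le> ennreal 20 / ennreal T"
      using kk_int by (intro divide_right_mono_ennreal) simp
    finally show ?thesis .
  qed
  have sf: "sigma_finite_measure \<mu>" by (rule prob_space_imp_sigma_finite[OF p\<mu>])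
  have gm2: "(\<lambda>(z, w). green z w) \<in> borel_measurable (borel \<Otimes>\<^sub>M \<mu>)"
    by (subst measurable_cong_sets[OF sets_pair_measure_cong[OF refl s\<mu>] refl]) (rule green_meas)
  have Gm: "(\<lambda>z. \<integral>\<^sup>+w. green z w \<partial>\<mu>) \<in> borel_measurable borel"
    using sigma_finite_measure.borel_measurable_nn_integral[OF sf gm2] .
  have "green_energy \<mu> = (\<integral>\<^sup>+z. (\<integral>\<^sup>+w. green z w \<partial>\<mu>) \<partial>\<mu>)" by (simp add: green_energy_def)
  also have "\<dots> = (\<integral>\<^sup>+t. (\<integral>\<^sup>+w. green (f t) w \<partial>\<mu>) \<partial>U)"
    unfolding \<mu>_def by (rule nn_integral_distr[OF fmU]) (use Gm in \<open>simp add: \<mu>_def\<close>)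
  also have "\<dots> = (\<integral>\<^sup>+t. (\<integral>\<^sup>+u. green (f t) (f u) \<partial>U) \<partial>U)"
    unfolding \<mu>_def by (intro nn_integral_cong nn_integral_distr[OF fmU]) simp
  also have "\<dots> \<le> (\<integral>\<^sup>+t. ennreal 20 / ennreal T \<partial>U)"
  proof (rule nn_integral_mono_AE)
    show "AE t in U. (\<integral>\<^sup>+u. green (f t) (f u) \<partial>U) \<le> ennreal 20 / ennreal T"
    proof -
      have AEU: "AE t in U. t \<in> {0..T}" unfolding U_def by (rule AE_uniform_measureI) auto
      then show ?thesis by eventually_elim (rule inner)
    qed
  qed
  also have "\<dots> = ennreal 20 / ennreal T"
    using prob_space.emeasure_space_1[OF Up] by simp
  also have "\<dots> = ennreal (20 / T)" using Tpos by (intro divide_ennreal) auto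
  finally have E: "green_energy \<mu> \<le> ennreal (20 / T)" .
  have V: "green_V K \<le> ennreal (20 / T)"
    unfolding green_V_def using \<mu>P E by (meson INF_lower order_trans)
  show ?thesis
  proof (cases "green_V K = 0")
    case True then show ?thesis by (simp add: green_cap_def)
  next
    case False
    obtain v where v: "green_V K = ennreal v" "0 \<le> v"
      using V by (cases "green_V K") (auto simp: top_unique)
    have vpos: "v > 0" using False v by auto
    have vle: "v \<le> 20 / T" using V v Tpos by (simp add: ennreal_le_iff)
    have "1/20 * ln (1/\<epsilon>) \<le> T / 20" using Tge by simp
    also have "T / 20 \<le> 1 / v" using vle vpos Tpos by (simp add: field_simps)
    finally have "ennreal (1/20 * ln (1/\<epsilon>)) \<le> ennreal (1 / v)" by (rule ennreal_leI)
    also have "ennreal (1 / v) = 1 / green_V K" using v vpos by (simp add: divide_ennreal[symmetric])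
    finally show ?thesis by (simp add: green_cap_def)
  qed
qed

theorem theorem3p12:
  shows "\<exists>c::real. c > 0 \<and>
    (\<forall>K \<epsilon>::real. compact K \<and> connected K \<and> K \<subseteq> unit_disc \<and> 0 < \<epsilon> \<and> \<epsilon> < 1 \<and>
        diam_rho K > 1 - \<epsilon> \<longrightarrow> green_cap K \<ge> ennreal (c * ln (1 / \<epsilon>)))"
proof (intro exI[of _ "1/20"] conjI allI impI)
  show "(1/20::real) > 0" by simp
next
  fix K and \<epsilon> :: real
  assume "compact K \<and> connected K \<and> K \<subseteq> unit_disc \<and> 0 < \<epsilon> \<and> \<epsilon> < 1 \<and> diam_rho K > 1 - \<epsilon>"
  then show "green_cap K \<ge> ennreal (1/20 * ln (1 / \<epsilon>))" by (intro main_bound) auto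
qed

end
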